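(* For every even $n\ge 6$, $$|E_n| = 4\,|E_{n-2}| - \mathrm{Cat}(n/2-1) = 2\,|E_{n-1}| - \mathrm{Cat}(n/2-1),$$ where $\mathrm{Cat}(k)=\frac{1}{k+1}\binom{2k}{k}$ is the $k$-th Catalan number.
   Context: Let $D$ (OEIS A036991) be the set of nonnegative integers $m$ such that, reading the binary expansion of $m$ from the least significant bit to the most significant bit, at every point the number of 1's read so far is at least the number of 0's read so far. For $n\ge1$ let $M_n=2^n-1$ and let the $n$-level be $E_n=D\cap(M_{n-1},M_n]$, i.e. the elements of $D$ whose binary expansion has exactly $n$ digits. *)

theory Defs
  imports Main
begin

fun bitlen :: "nat \<Rightarrow> nat" where
  "bitlen m = (if m = 0 then 0 else Suc (bitlen (m div 2)))"

declare bitlen.simps[simp del]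

definition bit_at :: "nat \<Rightarrow> nat \<Rightarrow> nat" where
  "bit_at m i = (m div 2 ^ i) mod 2"

(* A036991: reading from LSB to MSB, at every point #1's so far \<ge> #0's so far *)
definition D :: "nat set" where
  "D = {m. \<forall>k \<le> bitlen m.
          card {i. i < k \<and> bit_at m i = 0} \<le> card {i. i < k \<and> bit_at m i = 1}}"

definition Mn :: "nat \<Rightarrow> nat" where
  "Mn n = 2 ^ n - 1"

definition E :: "nat \<Rightarrow> nat set" where
  "E n = D \<inter> {Mn (n - 1)<..Mn n}"

definition Cat :: "nat \<Rightarrow> nat" where
  "Cat k = ((2 * k) choose k) div (k + 1)"

end

theory Submission
  imports Defs
begin

fun ones :: "nat \<Rightarrow> nat \<Rightarrow> nat" where
  "ones m 0 = 0" | "ones m (Suc k) = ones m k + bit_at m k"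

definition good :: "nat \<Rightarrow> nat \<Rightarrow> bool" where
  "good n m = (\<forall>k\<le>n. k \<le> 2 * ones m k)"

lemma bit_at_le: "bit_at m i \<le> 1"
  unfolding bit_at_def by simp

lemma ones_le: "ones m k \<le> k"
proof (induction k)
  case (Suc k) thus ?case using bit_at_le[of m k] by simp
qed simp

lemma card_Suc_split: "card {i. i < Suc k \<and> P i} = card {i. i < k \<and> P i} + (if P k then 1 else 0)"
proof -
  have "{i. i < Suc k \<and> P i} = {i. i < k \<and> P i} \<union> (if P k then {k} else {})"
    by (auto simp: less_Suc_eq)
  then show ?thesis by auto
qed

lemma card_ones: "card {i. i < k \<and> bit_at m i = 1} = ones m k"
proof (induction k)
  case (Suc k)
  have "bit_at m k = 0 \<or> bit_at m k = 1" using bit_at_le[of m k] by linarith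
  moreover have "card {i. i < Suc k \<and> bit_at m i = 1} = card {i. i < k \<and> bit_at m i = 1} + (if bit_at m k = 1 then 1 else 0)"
    by (rule card_Suc_split)
  ultimately show ?case using Suc by auto
qed simp

lemma card_zeros: "card {i. i < k \<and> bit_at m i = 0} = k - ones m k"
proof (induction k)
  case (Suc k)
  have "bit_at m k = 0 \<or> bit_at m k = 1" using bit_at_le[of m k] by linarith
  moreover have "card {i. i < Suc k \<and> bit_at m i = 0} = card {i. i < k \<and> bit_at m i = 0} + (if bit_at m k = 0 then 1 else 0)"
    by (rule card_Suc_split)
  ultimately show ?case using Suc ones_le[of m k] by auto
qed simp

lemma D_iff: "m \<in> D \<longleftrightarrow> good (bitlen m) m"
  unfolding D_def good_def card_ones card_zeros by auto

lemma bitlen_eq: "m < 2^n \<Longrightarrow> 2^n \<le> 2*m \<Longrightarrow> bitlen m = n"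
proof (induction n arbitrary: m)
  case 0 then show ?case by simp
next
  case (Suc n)
  show ?case
  proof (cases n)
    case 0
    then have "m = 1" using Suc.prems by simp
    then show ?thesis using 0 by (simp add: bitlen.simps)
  next
    case (Suc j)
    have e: "(2::nat)^n = 2 * 2^j" using Suc by simp
    have "(2 * 2^j) div 2 \<le> m div 2" using Suc.prems e by (intro div_le_mono) simp
    then have "2^n \<le> 2 * (m div 2)" using e by simp
    then have "bitlen (m div 2) = n" using Suc.prems by (intro Suc.IH) auto
    moreover have "m \<noteq> 0" using Suc.prems by auto
    ultimately show ?thesis by (subst bitlen.simps) simp
  qed
qed

lemma bit_at_low: assumes "m < 2^n" "b \<le> 1" "i < n"
  shows "bit_at (m + b * 2^n) i = bit_at m i"
proof -
  obtain q where q: "n = Suc (i + q)" using assms(3) less_iff_Suc_add by blast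
  have eq: "b * 2^n = (b * 2 * 2^q) * 2^i" unfolding q by (simp add: power_add)
  have "(m + (b * 2 * 2^q) * 2^i) div 2^i = b * 2 * 2^q + m div 2^i"
    by (rule div_mult_self1) simp
  then have "(m + b * 2^n) div 2^i = m div 2^i + (b * 2^q) * 2"
    unfolding eq by simp
  then show ?thesis unfolding bit_at_def by simp
qed

lemma bit_at_top: assumes "m < 2^n" "b \<le> 1"
  shows "bit_at (m + b * 2^n) n = b"
proof -
  have "(m + b * 2^n) div 2^n = b" using assms by simp
  then show ?thesis unfolding bit_at_def using assms by simp
qed

lemma ones_low: assumes "m < 2^n" "b \<le> 1" "k \<le> n"
  shows "ones (m + b * 2^n) k = ones m k"
  using assms(3) by (induction k) (auto simp: bit_at_low[OF assms(1,2)])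

lemma ones_top: assumes "m < 2^n" "b \<le> 1"
  shows "ones (m + b * 2^n) (Suc n) = ones m n + b"
  using ones_low[OF assms order.refl] bit_at_top[OF assms] by simp

lemma good_ext: assumes "m < 2^n" "b \<le> 1"
  shows "good (Suc n) (m + b * 2^n) \<longleftrightarrow> good n m \<and> Suc n \<le> 2 * (ones m n + b)"
  unfolding good_def using ones_low[OF assms] ones_top[OF assms]
  by (auto simp: le_Suc_eq)


definition V :: "nat \<Rightarrow> nat \<Rightarrow> nat set" where
  "V n k = {m. m < 2^n \<and> good n m \<and> ones m n = k}"

definition W :: "nat \<Rightarrow> nat set" where
  "W n = {m. m < 2^n \<and> good n m}"

lemma card_split:
  "card {m::nat. m < 2^(Suc n) \<and> P m} = card {m::nat. m < 2^n \<and> P m} + card {m. m < 2^n \<and> P (m + 2^n)}"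
proof -
  have eq: "{m. m < 2^(Suc n) \<and> P m} = {m. m < 2^n \<and> P m} \<union> (\<lambda>m. m + 2^n) ` {m. m < 2^n \<and> P (m + 2^n)}"
  proof (rule set_eqI, rule iffI)
    fix x :: nat assume x: "x \<in> {m. m < 2^(Suc n) \<and> P m}"
    show "x \<in> {m. m < 2^n \<and> P m} \<union> (\<lambda>m. m + 2^n) ` {m. m < 2^n \<and> P (m + 2^n)}"
    proof (cases "x < 2^n")
      case True then show ?thesis using x by auto
    next
      case False
      then have "x = (x - 2^n) + 2^n" "x - 2^n < 2^n" using x by auto
      then show ?thesis using x by (metis (mono_tags, lifting) UnI2 image_eqI mem_Collect_eq)
    qed
  qed auto
  have "card ((\<lambda>m. m + 2^n) ` {m. m < 2^n \<and> P (m + 2^n)}) = card {m. m < 2^n \<and> P (m + 2^n)}"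
    by (rule card_image) (auto simp: inj_on_def)
  moreover have "{m. m < 2^n \<and> P m} \<inter> (\<lambda>m. m + 2^n) ` {m. m < 2^n \<and> P (m + 2^n)} = {}"
    by auto
  ultimately show ?thesis unfolding eq by (subst card_Un_disjoint) auto
qed

lemma good_top: "good n m \<Longrightarrow> n \<le> 2 * ones m n"
  unfolding good_def by auto

lemma good0: "m < 2^n \<Longrightarrow> good (Suc n) m \<longleftrightarrow> good n m \<and> Suc n \<le> 2 * ones m n"
  using good_ext[of m n 0] by simp

lemma good1: "m < 2^n \<Longrightarrow> good (Suc n) (m + 2^n) \<longleftrightarrow> good n m"
  using good_ext[of m n 1] good_top[of n m] by auto

lemma ones0: "m < 2^n \<Longrightarrow> ones m (Suc n) = ones m n"
  using ones_top[of m n 0] by simp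

lemma ones1: "m < 2^n \<Longrightarrow> ones (m + 2^n) (Suc n) = Suc (ones m n)"
  using ones_top[of m n 1] by simp

lemma card_V_Suc: "card (V (Suc n) k) = (if Suc n \<le> 2 * k then card (V n k) else 0)
   + (if k \<ge> 1 then card (V n (k - 1)) else 0)"
proof -
  have "card (V (Suc n) k) = card {m. m < 2^n \<and> (good (Suc n) m \<and> ones m (Suc n) = k)}
     + card {m. m < 2^n \<and> (good (Suc n) (m + 2^n) \<and> ones (m + 2^n) (Suc n) = k)}"
    unfolding V_def by (rule card_split)
  also have "{m. m < 2^n \<and> (good (Suc n) m \<and> ones m (Suc n) = k)} =
     (if Suc n \<le> 2 * k then V n k else {})"
    unfolding V_def using good0 ones0 by auto
  also have "{m. m < 2^n \<and> (good (Suc n) (m + 2^n) \<and> ones (m + 2^n) (Suc n) = k)} =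
     (if k \<ge> 1 then V n (k - 1) else {})"
    unfolding V_def using good1 ones1 by auto
  finally show ?thesis by simp
qed

lemma card_V: "int (card (V n k)) = (if n \<le> 2 * k then int (n choose k) - int (n choose Suc k) else 0)"
proof (induction n arbitrary: k)
  case 0
  have "V 0 k = (if k = 0 then {0} else {})" unfolding V_def good_def by auto
  then show ?case by simp
next
  case (Suc n)
  show ?case
  proof (cases "Suc n \<le> 2 * k")
    case True
    then obtain j where j: "k = Suc j" by (cases k) auto
    have pk: "Suc n choose k = (n choose j) + (n choose k)" "Suc n choose Suc k = (n choose k) + (n choose Suc k)"
      using j by simp_all
    show ?thesis
    proof (cases "n \<le> 2 * j")
      case True
      then show ?thesis using Suc.IH[of k] Suc.IH[of j] \<open>Suc n \<le> 2 * k\<close> j card_V_Suc[of n k] pk by simp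
    next
      case False
      then have "n = 2 * j + 1" using \<open>Suc n \<le> 2 * k\<close> j by simp
      then have "n choose j = n choose k" using binomial_symmetric[of j n] j by simp
      then show ?thesis using Suc.IH[of k] Suc.IH[of j] \<open>Suc n \<le> 2 * k\<close> j card_V_Suc[of n k] pk False by simp
    qed
  next
    case False
    show ?thesis
    proof (cases k)
      case 0 then show ?thesis using False card_V_Suc[of n k] by simp
    next
      case (Suc k')
      then have "\<not> n \<le> 2 * (k - 1)" using False by simp
      then have "card (V n (k - 1)) = 0" using Suc.IH[of "k - 1"] by simp
      then show ?thesis using False card_V_Suc[of n k] by auto
    qed
  qed
qed

lemma card_W_Suc: "card (W (Suc n)) = card {m. m < 2^n \<and> good n m \<and> Suc n \<le> 2 * ones m n} + card (W n)"
proof -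
  have "card (W (Suc n)) = card {m. m < 2^n \<and> good (Suc n) m}
     + card {m. m < 2^n \<and> good (Suc n) (m + 2^n)}"
    unfolding W_def by (rule card_split)
  also have "{m. m < 2^n \<and> good (Suc n) m} = {m. m < 2^n \<and> good n m \<and> Suc n \<le> 2 * ones m n}"
    using good0 by auto
  also have "{m. m < 2^n \<and> good (Suc n) (m + 2^n)} = W n"
    unfolding W_def using good1 by auto
  finally show ?thesis .
qed

lemma card_W_odd: "odd n \<Longrightarrow> card (W (Suc n)) = 2 * card (W n)"
proof -
  assume o: "odd n"
  have "{m. m < 2^n \<and> good n m \<and> Suc n \<le> 2 * ones m n} = W n"
  proof -
    have "Suc n \<le> 2 * ones m n" if "good n m" for m
    proof -
      have "n \<le> 2 * ones m n" using good_top[OF that] .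
      moreover have "n \<noteq> 2 * ones m n"
      proof
        assume "n = 2 * ones m n"
        then have "even n" by (metis dvd_triv_left)
        with o show False by simp
      qed
      ultimately show ?thesis by simp
    qed
    then show ?thesis unfolding W_def by auto
  qed
  then show ?thesis using card_W_Suc[of n] by simp
qed

lemma card_W_even: "card (W (Suc (2 * j))) + card (V (2 * j) j) = 2 * card (W (2 * j))"
proof -
  have fin: "finite (W (2 * j))" unfolding W_def by simp
  have sub: "V (2 * j) j \<subseteq> W (2 * j)" unfolding V_def W_def by auto
  have "{m. m < 2^(2*j) \<and> good (2*j) m \<and> Suc (2*j) \<le> 2 * ones m (2*j)} = W (2*j) - V (2*j) j"
    unfolding W_def V_def using good_top by fastforce
  then have "card {m. m < 2^(2*j) \<and> good (2*j) m \<and> Suc (2*j) \<le> 2 * ones m (2*j)} = card (W (2*j)) - card (V (2*j) j)"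
    using card_Diff_subset[OF _ sub] fin finite_subset[OF sub] by simp
  moreover have "card (V (2 * j) j) \<le> card (W (2 * j))" using card_mono[OF fin sub] .
  ultimately show ?thesis using card_W_Suc[of "2*j"] by simp
qed

lemma Cat_eq: "int (Cat j) = int (card (V (2 * j) j))"
proof -
  have key: "Suc j * ((2*j) choose Suc j) = j * ((2*j) choose j)"
  proof (cases j)
    case 0 then show ?thesis by simp
  next
    case (Suc i)
    have "Suc j * (Suc (j + i) choose Suc j) = Suc i * (Suc (j + i) choose j)"
      by (rule Suc_times_binomial_add)
    moreover have h2: "Suc (j + i) = 2 * j" using Suc by simp
    ultimately have "Suc j * ((2*j) choose Suc j) = Suc i * ((2*j) choose j)" by (simp only: h2)
    then show ?thesis by (metis Suc)
  qed
  have le: "(2*j) choose Suc j \<le> (2*j) choose j"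
  proof -
    have "Suc j * ((2*j) choose Suc j) \<le> Suc j * ((2*j) choose j)" using key by simp
    then show ?thesis using Suc_mult_le_cancel1 by blast
  qed
  have "(2*j) choose j = Suc j * (((2*j) choose j) - ((2*j) choose Suc j))"
    using key le by (simp add: diff_mult_distrib2)
  then have "Cat j = ((2*j) choose j) - ((2*j) choose Suc j)"
    unfolding Cat_def by (metis nonzero_mult_div_cancel_left Suc_eq_plus1 nat.distinct(1))
  then show ?thesis using card_V[of "2*j" j] le by simp
qed

lemma card_E: "card (E (Suc p)) = card (W p)"
proof -
  have "E (Suc p) = (\<lambda>m. m + 2^p) ` W p"
  proof (rule set_eqI, rule iffI)
    fix x assume x: "x \<in> E (Suc p)"
    then have r: "2^p \<le> x" "x < 2^Suc p" unfolding E_def Mn_def by auto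
    then have bl: "bitlen x = Suc p" by (intro bitlen_eq) auto
    have g: "good (Suc p) x" using x bl D_iff unfolding E_def by auto
    have "x = (x - 2^p) + 2^p" "x - 2^p < 2^p" using r by auto
    then show "x \<in> (\<lambda>m. m + 2^p) ` W p" using g good1 unfolding W_def
      by (metis (mono_tags, lifting) image_eqI mem_Collect_eq)
  next
    fix x assume "x \<in> (\<lambda>m. m + 2^p) ` W p"
    then obtain m where m: "x = m + 2^p" "m < 2^p" "good p m" unfolding W_def by auto
    then have bl: "bitlen x = Suc p" by (intro bitlen_eq) auto
    have "good (Suc p) x" using m good1 by simp
    then have "x \<in> D" using D_iff bl by simp
    moreover have "2^p - 1 < x" "x \<le> 2^Suc p - 1" using m by auto
    ultimately show "x \<in> E (Suc p)" unfolding E_def Mn_def by simp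
  qed
  moreover have "inj_on (\<lambda>m. m + 2^p) (W p)" by (auto simp: inj_on_def)
  ultimately show ?thesis by (simp add: card_image)
qed

theorem proposition10:
  fixes n :: nat
  assumes "even n" and "n \<ge> 6"
  shows "int (card (E n)) = 4 * int (card (E (n - 2))) - int (Cat (n div 2 - 1))
       \<and> int (card (E n)) = 2 * int (card (E (n - 1))) - int (Cat (n div 2 - 1))"
proof -
  from assms(1) obtain k where k: "n = 2 * k" by (rule evenE)
  define j where "j = k - 1"
  have j: "n = 2 * j + 2" "j \<ge> 2" using k assms(2) unfolding j_def by auto
  obtain i where i: "j = Suc i" using j by (cases j) auto
  have e1: "card (E n) = card (W (Suc (2 * j)))" using card_E[of "Suc (2*j)"] j by simp
  have e2: "card (E (n - 1)) = card (W (2 * j))" using card_E[of "2*j"] j by simp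
  have e3: "card (E (n - 2)) = card (W (2 * i + 1))" using card_E[of "2*i+1"] j i by simp
  have w: "card (W (2 * j)) = 2 * card (W (2 * i + 1))"
    using card_W_odd[of "2*i+1"] i by simp
  have c: "n div 2 - 1 = j" using j by simp
  show ?thesis using e1 e2 e3 w c card_W_even[of j] Cat_eq[of j] by simp
qed

end
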